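(* Consider the subsidy game described in the context, and suppose that in period 2 both developers choose openness $\bar\eta$ and the incumbent charges $w_2=w_L$. Define $$\bar{\eta}_{Hg} = \frac{k(\theta+s-w_H)}{2c-k(\theta+s-w_H)},\qquad \bar{\eta}_{Lg} = \frac{k(\theta+s-w_L)}{2c-k(\theta+s-w_L)}.$$ (a) $\bar\eta_{Hg}\le\bar\eta_{Lg}$, and: if the incumbent charges $w_1=w_H$ in period 1, the deployer selects the incumbent in period 2 iff $\eta_1\le\bar\eta_{Hg}$; if it charges $w_1=w_L$, the deployer selects the incumbent in period 2 iff $\eta_1\le\bar\eta_{Lg}$. (b) Conditional on the period-2 outcome, the incumbent's total profit is increasing in $\eta_1$: with $\alpha_1=\frac{(1+\eta_1)(\theta-w_1+s)}{2c}$ and $\alpha_2=\frac{(1+k\alpha_1)(1+\bar\eta)(\theta-w_L+s)}{2c}$, both $w_1\alpha_1+w_L\alpha_2$ and $w_1\alpha_1$ are monotonically increasing in $\eta_1\in[0,\bar\eta]$.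
   Context: Parameters: $\theta>0$, $c>0$, license fees $0\le w_L\le w_H\le\theta/2$, openness cap $\bar\eta>0$, data flywheel parameter $k\ge0$, subsidy $0\le s\le w_L$. Two periods $t\in\{1,2\}$; users choose engagement $\alpha_t$ maximizing $Q_t\alpha_t-\alpha_t^2/2$, so $\alpha_t=Q_t$, where $Q_t$ is the deployer's fine-tuning effort. Period 1: an incumbent developer chooses $w_1\in\{w_H,w_L\}$ and openness $\eta_1\in[0,\bar\eta]$; the deployer chooses $Q_1$ to maximize $(\theta-w_1+s)\alpha_1-\frac{cQ_1^2}{1+\eta_1}$. Period 2: the incumbent chooses $w_2\in\{w_H,w_L\}$ and $\eta_2\in[0,\bar\eta]$; an entrant charges $w_L$ and chooses $\tilde\eta_2\in[0,\bar\eta]$. For each developer the deployer chooses effort optimally: with the incumbent its period-2 profit is $(\theta-w_2+s)Q_2-\frac{cQ_2^2}{(1+k\alpha_1)(1+\eta_2)}$, with the entrant $(\theta-w_L+s)Q_2-\frac{cQ_2^2}{(1+\eta_1)(1+\tilde\eta_2)}$; it selects the incumbent iff the incumbent's optimized profit is at least the entrant's. Developers receive the full fee per unit: incumbent's payoff $w_1\alpha_1+w_2\alpha_2$ if selected in period 2, else $w_1\alpha_1$; entrant's payoff $w_L\alpha_2$ if selected, else $0$. Standing assumption: $k\le\min\Big\{\frac{2c\bar\eta}{(1+\bar\eta)(\theta-w_L+s)},\frac{2c(2\theta+2s-w_H-w_L)(w_H-w_L)}{(\theta-w_H+s)^2(\theta-w_L+s)}\Big\}$. *)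

theory Defs
  imports Complex_Main
begin

text \<open>Deployer's profit from fine-tuning effort Q when the per-unit margin is m and
  the effective cost divisor is D (engagement equals effort: alpha = Q).\<close>
definition deployer_profit :: "real \<Rightarrow> real \<Rightarrow> real \<Rightarrow> real \<Rightarrow> real" where
  "deployer_profit c m D Q = m * Q - c * Q^2 / D"

definition opt_profit :: "real \<Rightarrow> real \<Rightarrow> real \<Rightarrow> real" where
  "opt_profit c m D = Sup (deployer_profit c m D ` {0..})"

definition is_period1_effort :: "real \<Rightarrow> real \<Rightarrow> real \<Rightarrow> real \<Rightarrow> real \<Rightarrow> real \<Rightarrow> bool" where
  "is_period1_effort c \<theta> s w1 \<eta>1 Q \<longleftrightarrow>
     Q \<ge> 0 \<and> (\<forall>Q'\<ge>0. deployer_profit c (\<theta> - w1 + s) (1 + \<eta>1) Q'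
                        \<le> deployer_profit c (\<theta> - w1 + s) (1 + \<eta>1) Q)"

definition selects_incumbent ::
  "real \<Rightarrow> real \<Rightarrow> real \<Rightarrow> real \<Rightarrow> real \<Rightarrow> real \<Rightarrow> real \<Rightarrow> real \<Rightarrow> real \<Rightarrow> real \<Rightarrow> bool" where
  "selects_incumbent c \<theta> s wL k \<alpha>1 \<eta>1 w2 \<eta>2 \<eta>e2 \<longleftrightarrow>
     opt_profit c (\<theta> - w2 + s) ((1 + k * \<alpha>1) * (1 + \<eta>2))
       \<ge> opt_profit c (\<theta> - wL + s) ((1 + \<eta>1) * (1 + \<eta>e2))"

definition eta_g :: "real \<Rightarrow> real \<Rightarrow> real \<Rightarrow> real \<Rightarrow> real \<Rightarrow> real" where
  "eta_g c k \<theta> s w = k * (\<theta> + s - w) / (2 * c - k * (\<theta> + s - w))"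

end

theory Submission
  imports Defs
begin

lemma dp_eq:
  assumes "D > 0" "c > 0"
  shows "deployer_profit c m D Q = m^2*D/(4*c) - c/D*(Q - m*D/(2*c))^2"
  using assms by (simp add: deployer_profit_def field_simps power2_eq_square)

lemma opt_eq:
  assumes "D > 0" "c > 0" "m \<ge> 0"
  shows "opt_profit c m D = m^2*D/(4*c)"
proof -
  have mem: "m^2*D/(4*c) \<in> deployer_profit c m D ` {0..}"
  proof
    show "m^2*D/(4*c) = deployer_profit c m D (m*D/(2*c))" using assms by (simp add: dp_eq)
    show "m*D/(2*c) \<in> {0..}" using assms by simp
  qed
  have "\<forall>x\<in>deployer_profit c m D ` {0..}. x \<le> m^2*D/(4*c)"
    using assms by (auto simp: dp_eq)
  then show ?thesis unfolding opt_profit_def using cSup_eq_maximum[OF mem] by blast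
qed

lemma eff_eq:
  assumes "1 + e > 0" "c > 0" "m \<ge> 0" "is_period1_effort c \<theta> s w e Q" "m = \<theta> - w + s"
  shows "Q = m*(1+e)/(2*c)"
proof -
  have Q0: "m*(1+e)/(2*c) \<ge> 0" using assms by simp
  have "deployer_profit c m (1+e) (m*(1+e)/(2*c)) \<le> deployer_profit c m (1+e) Q"
    using assms Q0 unfolding is_period1_effort_def by blast
  then have "c/(1+e)*(Q - m*(1+e)/(2*c))^2 \<le> 0" using assms by (simp add: dp_eq)
  moreover have "c/(1+e) > 0" using assms by simp
  ultimately have "(Q - m*(1+e)/(2*c))^2 \<le> 0"
    by (smt (verit) mult_pos_pos zero_less_power2 divide_pos_pos)
  then show ?thesis by simp
qed

lemma sel:
  assumes "c > 0" "k \<ge> 0" "\<eta>bar > 0" "0 \<le> e" "mL > 0" "M \<ge> 0" "k*M < 2*c"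
    "\<alpha> = M*(1+e)/(2*c)"
  shows "(opt_profit c mL ((1 + k*\<alpha>) * (1 + \<eta>bar)) \<ge> opt_profit c mL ((1+e)*(1+\<eta>bar)))
     \<longleftrightarrow> e \<le> k*M/(2*c - k*M)"
proof -
  have a0: "\<alpha> \<ge> 0" using assms by simp
  have "opt_profit c mL ((1 + k*\<alpha>) * (1 + \<eta>bar)) = mL^2*((1 + k*\<alpha>) * (1 + \<eta>bar))/(4*c)"
  proof (rule opt_eq)
    have "k*\<alpha> \<ge> 0" using a0 assms(2) by simp
    then show "(1 + k*\<alpha>) * (1 + \<eta>bar) > 0" using assms(3) by simp
  qed (use assms in auto)
  moreover have "opt_profit c mL ((1+e)*(1+\<eta>bar)) = mL^2*((1+e)*(1+\<eta>bar))/(4*c)"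
    using assms by (intro opt_eq) auto
  moreover have "(mL^2*((1+e)*(1+\<eta>bar))/(4*c) \<le> mL^2*((1 + k*\<alpha>) * (1 + \<eta>bar))/(4*c))
     \<longleftrightarrow> 1+e \<le> 1+k*\<alpha>"
  proof -
    have p: "mL^2*(1+\<eta>bar)/(4*c) > 0" using assms by simp
    have "(mL^2*((1+e)*(1+\<eta>bar))/(4*c) \<le> mL^2*((1 + k*\<alpha>) * (1 + \<eta>bar))/(4*c))
      \<longleftrightarrow> (mL^2*(1+\<eta>bar)/(4*c))*(1+e) \<le> (mL^2*(1+\<eta>bar)/(4*c))*(1+k*\<alpha>)"
      by (simp add: algebra_simps)
    also have "\<dots> \<longleftrightarrow> 1+e \<le> 1+k*\<alpha>" using p by (rule mult_le_cancel_left_pos)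
    finally show ?thesis .
  qed
  moreover have "(1+e \<le> 1+k*\<alpha>) \<longleftrightarrow> e*(2*c - k*M) \<le> k*M"
  proof -
    have ka: "(2*c)*(k*\<alpha>) = k*M*(1+e)" using assms(1,8) by simp
    have "(1+e \<le> 1+k*\<alpha>) \<longleftrightarrow> (2*c)*e \<le> (2*c)*(k*\<alpha>)" using assms(1) by simp
    also have "\<dots> \<longleftrightarrow> e*(2*c - k*M) \<le> k*M" unfolding ka by (simp add: algebra_simps)
    finally show ?thesis .
  qed
  moreover have "(e*(2*c - k*M) \<le> k*M) \<longleftrightarrow> e \<le> k*M/(2*c - k*M)"
    using assms by (simp add: pos_le_divide_eq)
  ultimately show ?thesis by simp
qed

theorem mainTheorem7:
  fixes \<theta> c wL wH \<eta>bar k s :: real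
  assumes "\<theta> > 0" "c > 0"
    and "0 \<le> wL" "wL \<le> wH" "wH \<le> \<theta> / 2"
    and "\<eta>bar > 0" "k \<ge> 0"
    and "0 \<le> s" "s \<le> wL"
    and "k \<le> min (2 * c * \<eta>bar / ((1 + \<eta>bar) * (\<theta> - wL + s)))
                 (2 * c * (2 * \<theta> + 2 * s - wH - wL) * (wH - wL)
                    / ((\<theta> - wH + s)^2 * (\<theta> - wL + s)))"
  shows "eta_g c k \<theta> s wH \<le> eta_g c k \<theta> s wL
    \<and> (\<forall>\<eta>1 \<alpha>1. 0 \<le> \<eta>1 \<longrightarrow> \<eta>1 \<le> \<eta>bar \<longrightarrow> is_period1_effort c \<theta> s wH \<eta>1 \<alpha>1 \<longrightarrow>
          (selects_incumbent c \<theta> s wL k \<alpha>1 \<eta>1 wL \<eta>bar \<eta>bar \<longleftrightarrow> \<eta>1 \<le> eta_g c k \<theta> s wH))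
    \<and> (\<forall>\<eta>1 \<alpha>1. 0 \<le> \<eta>1 \<longrightarrow> \<eta>1 \<le> \<eta>bar \<longrightarrow> is_period1_effort c \<theta> s wL \<eta>1 \<alpha>1 \<longrightarrow>
          (selects_incumbent c \<theta> s wL k \<alpha>1 \<eta>1 wL \<eta>bar \<eta>bar \<longleftrightarrow> \<eta>1 \<le> eta_g c k \<theta> s wL))
    \<and> (\<forall>w1 \<in> {wH, wL}.
         (let \<alpha>1 = (\<lambda>\<eta>1. (1 + \<eta>1) * (\<theta> - w1 + s) / (2 * c));
              \<alpha>2 = (\<lambda>\<eta>1. (1 + k * \<alpha>1 \<eta>1) * (1 + \<eta>bar) * (\<theta> - wL + s) / (2 * c))
          in mono_on {0..\<eta>bar} (\<lambda>\<eta>1. w1 * \<alpha>1 \<eta>1 + wL * \<alpha>2 \<eta>1)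
           \<and> mono_on {0..\<eta>bar} (\<lambda>\<eta>1. w1 * \<alpha>1 \<eta>1)))"
proof -
  define mL where "mL = \<theta> - wL + s"
  define mH where "mH = \<theta> - wH + s"
  have mLp: "mL > 0" and mHp: "mH > 0" and mHL: "mH \<le> mL"
    using assms unfolding mL_def mH_def by auto
  have "k \<le> 2 * c * \<eta>bar / ((1 + \<eta>bar) * mL)" using assms(10) unfolding mL_def by simp
  then have "k * ((1 + \<eta>bar) * mL) \<le> 2 * c * \<eta>bar"
    using mLp assms(6) by (simp add: pos_le_divide_eq)
  then have "(1 + \<eta>bar) * (k*mL) < (1 + \<eta>bar) * (2*c)" using assms(2,6)
    by (simp add: algebra_simps)
  then have kmL: "k*mL < 2*c" using assms(6) by simp
  have kmHL: "k*mH \<le> k*mL" using mHL assms(7) by (simp add: mult_left_mono)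
  have kmH: "k*mH < 2*c" using kmL kmHL by simp
  have eH: "eta_g c k \<theta> s wH = k*mH/(2*c - k*mH)" unfolding eta_g_def mH_def by (simp add: algebra_simps)
  have eL: "eta_g c k \<theta> s wL = k*mL/(2*c - k*mL)" unfolding eta_g_def mL_def by (simp add: algebra_simps)
  have A: "eta_g c k \<theta> s wH \<le> eta_g c k \<theta> s wL"
  proof -
    have "k*mH*(2*c - k*mL) \<le> k*mL*(2*c - k*mH)"
      using kmHL assms(2) by (simp add: algebra_simps)
    have "k*mL \<ge> 0" using assms(7) mLp by simp
    then show ?thesis unfolding eH eL using kmL kmHL by (intro frac_le) auto
  qed
  have B: "\<forall>\<eta>1 \<alpha>1. 0 \<le> \<eta>1 \<longrightarrow> \<eta>1 \<le> \<eta>bar \<longrightarrow> is_period1_effort c \<theta> s w \<eta>1 \<alpha>1 \<longrightarrow>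
          (selects_incumbent c \<theta> s wL k \<alpha>1 \<eta>1 wL \<eta>bar \<eta>bar \<longleftrightarrow> \<eta>1 \<le> eta_g c k \<theta> s w)"
    if w: "w = wH \<or> w = wL" for w
  proof (intro allI impI)
    fix \<eta>1 \<alpha>1 assume h: "0 \<le> \<eta>1" "\<eta>1 \<le> \<eta>bar" "is_period1_effort c \<theta> s w \<eta>1 \<alpha>1"
    define M where "M = \<theta> - w + s"
    have M: "M \<ge> 0" "k*M < 2*c" using w mLp mHp kmL kmH unfolding M_def mL_def mH_def by auto
    have a: "\<alpha>1 = M*(1+\<eta>1)/(2*c)" using eff_eq[OF _ assms(2) M(1) h(3) M_def] h by simp
    have e: "eta_g c k \<theta> s w = k*M/(2*c - k*M)" unfolding eta_g_def M_def by (simp add: algebra_simps)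
    show "selects_incumbent c \<theta> s wL k \<alpha>1 \<eta>1 wL \<eta>bar \<eta>bar \<longleftrightarrow> \<eta>1 \<le> eta_g c k \<theta> s w"
      unfolding selects_incumbent_def e
      using sel[OF assms(2,7,6) h(1) mLp M a] unfolding mL_def by simp
  qed
  have C: "mono_on {0..\<eta>bar} (\<lambda>\<eta>1. w1 * ((1 + \<eta>1) * (\<theta> - w1 + s) / (2 * c)) + wL * ((1 + k * ((1 + \<eta>1) * (\<theta> - w1 + s) / (2 * c))) * (1 + \<eta>bar) * (\<theta> - wL + s) / (2 * c)))
     \<and> mono_on {0..\<eta>bar} (\<lambda>\<eta>1. w1 * ((1 + \<eta>1) * (\<theta> - w1 + s) / (2 * c)))"
    if w: "w1 = wH \<or> w1 = wL" for w1
  proof -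
    define M where "M = \<theta> - w1 + s"
    have M: "M \<ge> 0" "w1 \<ge> 0" using w mLp mHp assms unfolding M_def mL_def mH_def by auto
    have f1: "mono_on {0..\<eta>bar} (\<lambda>\<eta>1. w1 * ((1 + \<eta>1) * M / (2 * c)))"
    proof (rule mono_onI)
      fix x y :: real assume "x \<le> y"
      then have 1: "(1 + x) * M / (2 * c) \<le> (1 + y) * M / (2 * c)"
        using M assms(2) by (simp add: divide_right_mono mult_right_mono)
      show "w1 * ((1 + x) * M / (2 * c)) \<le> w1 * ((1 + y) * M / (2 * c))"
        by (rule mult_left_mono[OF 1 M(2)])
    qed
    have f2: "mono_on {0..\<eta>bar} (\<lambda>\<eta>1. w1 * ((1 + \<eta>1) * M / (2 * c)) + wL * ((1 + k * ((1 + \<eta>1) * M / (2 * c))) * (1 + \<eta>bar) * mL / (2 * c)))"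
    proof (rule mono_onI)
      fix x y :: real assume xy: "x \<le> y"
      then have 1: "(1 + x) * M / (2 * c) \<le> (1 + y) * M / (2 * c)"
        using M assms(2) by (simp add: divide_right_mono mult_right_mono)
      have "w1 * ((1 + x) * M / (2 * c)) \<le> w1 * ((1 + y) * M / (2 * c))"
        by (rule mult_left_mono[OF 1 M(2)])
      moreover have "wL * ((1 + k * ((1 + x) * M / (2 * c))) * (1 + \<eta>bar) * mL / (2 * c))
          \<le> wL * ((1 + k * ((1 + y) * M / (2 * c))) * (1 + \<eta>bar) * mL / (2 * c))"
      proof -
        have "k * ((1 + x) * M / (2 * c)) \<le> k * ((1 + y) * M / (2 * c))"
          by (rule mult_left_mono[OF 1 assms(7)])
        then have "(1 + k * ((1 + x) * M / (2 * c))) * ((1 + \<eta>bar) * mL / (2 * c))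
           \<le> (1 + k * ((1 + y) * M / (2 * c))) * ((1 + \<eta>bar) * mL / (2 * c))"
          using mLp assms(2,6) by (intro mult_right_mono) auto
        from mult_left_mono[OF this assms(3)] show ?thesis by (simp only: mult.assoc times_divide_eq_right)
      qed
      ultimately show "w1 * ((1 + x) * M / (2 * c)) + wL * ((1 + k * ((1 + x) * M / (2 * c))) * (1 + \<eta>bar) * mL / (2 * c))
        \<le> w1 * ((1 + y) * M / (2 * c)) + wL * ((1 + k * ((1 + y) * M / (2 * c))) * (1 + \<eta>bar) * mL / (2 * c))"
        by simp
    qed
    show ?thesis using f1 f2 unfolding M_def mL_def by simp
  qed
  have C': "\<forall>w1 \<in> {wH, wL}.
         (let \<alpha>1 = (\<lambda>\<eta>1. (1 + \<eta>1) * (\<theta> - w1 + s) / (2 * c));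
              \<alpha>2 = (\<lambda>\<eta>1. (1 + k * \<alpha>1 \<eta>1) * (1 + \<eta>bar) * (\<theta> - wL + s) / (2 * c))
          in mono_on {0..\<eta>bar} (\<lambda>\<eta>1. w1 * \<alpha>1 \<eta>1 + wL * \<alpha>2 \<eta>1)
           \<and> mono_on {0..\<eta>bar} (\<lambda>\<eta>1. w1 * \<alpha>1 \<eta>1))"
    unfolding Let_def using C by blast
  show ?thesis using A B[of wH] B[of wL] C' by blast
qed

end
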